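(* Let $q$ be a power of $2$, $s\ge2$, and $n\ge s$ integers with $d_{\max\text{-}iso}(q;[n,s])\ge1$; let $\pi:\mathbb{F}_{q^s}\to\mathbb{F}_q^n$ be an isometry whose image $\pi(\mathbb{F}_{q^s})$ is an $[n,s,d]_q$ code with $d=d_{\max\text{-}iso}(q;[n,s])$. Let $a,b\in\mathbb{F}_{q^s}$ with $b\neq0$ and let $N\ge2$. Let $r\ge0$ be such that $2^r$ divides $N+1$ but $2^{r+1}$ does not, let $N+1=2^r(m+1)$, and let $\theta\in\overline{\mathbb{F}}_q$ be a primitive $(m+1)$-th root of unity. Assume: if $r=0$, then $a/b\notin\{1/b+\theta^i+\theta^{-i}:1\le i\le m/2\}$; if $r\ge1$ and $m=0$, then $a\ne1$; if $r\ge1$ and $m\ge1$, then $a/b\notin\{1/b\}\cup\{1/b+\theta^i+\theta^{-i}:1\le i\le m/2\}$. Then $\pi^{\otimes 2N}(\hat C_N(a,b))$ is an LCD code over $\mathbb{F}_q$ with parameters $[2nN,sN,D^*]_q$, where $D^*\ge dD$ and $D$ is the minimum distance of $\hat C_N(a,b)$.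
   Context: For a field $K$, $a,b\in K$ and $N\ge 2$, $\hat T_N(a,b)$ is the $N\times N$ symmetric tridiagonal Toeplitz matrix with diagonal entries $a$, first super- and sub-diagonal entries $b$, other entries $0$; $\hat C_N(a,b)$ is the $[2N,N]$ linear code over $K$ (here $K=\mathbb{F}_{q^s}$) with generator matrix $[I_N\mid\hat T_N(a,b)]$. A linear code $C$ is LCD if $C\cap C^\perp=\{0\}$ (Euclidean dual). An $\mathbb{F}_q$-linear map $\pi:\mathbb{F}_{q^s}\to\mathbb{F}_q^n$ ($n\ge s\ge2$) is an isometry if there is an $\mathbb{F}_q$-basis $(e_1,\dots,e_s)$ of $\mathbb{F}_{q^s}$ with trace-dual basis $(e'_1,\dots,e'_s)$ such that $\pi(e_i)\cdot\pi(e'_j)=\delta_{ij}$ for all $i,j$ (standard inner product on $\mathbb{F}_q^n$). $d_{\max\text{-}iso}(q;[n,s])$ is the largest $d$ such that some isometry $\pi:\mathbb{F}_{q^s}\to\mathbb{F}_q^n$ has image $\pi(\mathbb{F}_{q^s})$ (an $[n,s]_q$ code) of minimum distance $d$. The map $\pi^{\otimes 2N}:\mathbb{F}_{q^s}^{2N}\to\mathbb{F}_q^{2Nn}$ is $(c_1,\dots,c_{2N})\mapsto(\pi(c_1),\dots,\pi(c_{2N}))$. *)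

theory Defs
  imports "HOL-Algebra.Algebraic_Closure_Type"
begin

text \<open>The field F_{q^s} is a finite field type 'K with CARD('K) = q^s.
  The prime subfield F_q is realised as the subfield {x. x^q = x} of 'K.
  Vectors of length n are functions nat => 'K vanishing at indices >= n.\<close>

definition Fsub :: "nat \<Rightarrow> 'K::field set" where
  "Fsub q = {x. x ^ q = x}"

definition vecs :: "'K::field set \<Rightarrow> nat \<Rightarrow> (nat \<Rightarrow> 'K) set" where
  "vecs F n = {v. (\<forall>i<n. v i \<in> F) \<and> (\<forall>i\<ge>n. v i = 0)}"

definition smult_vec :: "'K::field \<Rightarrow> (nat \<Rightarrow> 'K) \<Rightarrow> (nat \<Rightarrow> 'K)" where
  "smult_vec c v = (\<lambda>j. c * v j)"

definition dotp :: "nat \<Rightarrow> (nat \<Rightarrow> 'K::field) \<Rightarrow> (nat \<Rightarrow> 'K) \<Rightarrow> 'K" where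
  "dotp n u v = (\<Sum>i<n. u i * v i)"

definition hamming :: "nat \<Rightarrow> (nat \<Rightarrow> 'K::field) \<Rightarrow> (nat \<Rightarrow> 'K) \<Rightarrow> nat" where
  "hamming n x y = card {i. i < n \<and> x i \<noteq> y i}"

text \<open>Minimum distance of a code (with at least two codewords).\<close>
definition min_dist :: "nat \<Rightarrow> (nat \<Rightarrow> 'K::field) set \<Rightarrow> nat" where
  "min_dist n C = Min {hamming n x y | x y. x \<in> C \<and> y \<in> C \<and> x \<noteq> y}"

definition lin_code :: "'K::field set \<Rightarrow> nat \<Rightarrow> (nat \<Rightarrow> 'K) set \<Rightarrow> bool" where
  "lin_code F n C \<longleftrightarrow> C \<subseteq> vecs F n \<and> (\<lambda>_. 0) \<in> C \<and>
     (\<forall>x\<in>C. \<forall>y\<in>C. (\<lambda>j. x j + y j) \<in> C) \<and> (\<forall>c\<in>F. \<forall>x\<in>C. smult_vec c x \<in> C)"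

definition lin_indep_vecs :: "'K::field set \<Rightarrow> nat \<Rightarrow> (nat \<Rightarrow> nat \<Rightarrow> 'K) \<Rightarrow> bool" where
  "lin_indep_vecs F k v \<longleftrightarrow> (\<forall>c. (\<forall>i<k. c i \<in> F) \<longrightarrow>
      (\<lambda>j. \<Sum>i<k. c i * v i j) = (\<lambda>_. 0) \<longrightarrow> (\<forall>i<k. c i = 0))"

definition code_dim :: "'K::field set \<Rightarrow> (nat \<Rightarrow> 'K) set \<Rightarrow> nat \<Rightarrow> bool" where
  "code_dim F C k \<longleftrightarrow> (\<exists>v. (\<forall>i<k. v i \<in> C) \<and> lin_indep_vecs F k v \<and>
      C = {(\<lambda>j. \<Sum>i<k. c i * v i j) | c. \<forall>i<k. c i \<in> F})"

definition dual_code :: "'K::field set \<Rightarrow> nat \<Rightarrow> (nat \<Rightarrow> 'K) set \<Rightarrow> (nat \<Rightarrow> 'K) set" where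
  "dual_code F n C = {v \<in> vecs F n. \<forall>c\<in>C. dotp n v c = 0}"

definition is_LCD :: "'K::field set \<Rightarrow> nat \<Rightarrow> (nat \<Rightarrow> 'K) set \<Rightarrow> bool" where
  "is_LCD F n C \<longleftrightarrow> C \<inter> dual_code F n C = {(\<lambda>_. 0)}"

definition trace :: "nat \<Rightarrow> nat \<Rightarrow> 'K::field \<Rightarrow> 'K" where
  "trace q s x = (\<Sum>i<s. x ^ (q ^ i))"

definition is_basis_over :: "'K::field set \<Rightarrow> nat \<Rightarrow> (nat \<Rightarrow> 'K) \<Rightarrow> bool" where
  "is_basis_over F s e \<longleftrightarrow>
     (\<forall>c. (\<forall>i<s. c i \<in> F) \<longrightarrow> (\<Sum>i<s. c i * e i) = 0 \<longrightarrow> (\<forall>i<s. c i = 0)) \<and>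
     (\<forall>x. \<exists>c. (\<forall>i<s. c i \<in> F) \<and> x = (\<Sum>i<s. c i * e i))"

definition Fq_linear_map :: "nat \<Rightarrow> nat \<Rightarrow> ('K::field \<Rightarrow> nat \<Rightarrow> 'K) \<Rightarrow> bool" where
  "Fq_linear_map q n \<pi> \<longleftrightarrow> range \<pi> \<subseteq> vecs (Fsub q) n \<and>
     (\<forall>x y. \<pi> (x + y) = (\<lambda>j. \<pi> x j + \<pi> y j)) \<and>
     (\<forall>c\<in>Fsub q. \<forall>x. \<pi> (c * x) = smult_vec c (\<pi> x))"

definition is_isometry :: "nat \<Rightarrow> nat \<Rightarrow> nat \<Rightarrow> ('K::field \<Rightarrow> nat \<Rightarrow> 'K) \<Rightarrow> bool" where
  "is_isometry q s n \<pi> \<longleftrightarrow> Fq_linear_map q n \<pi> \<and>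
     (\<exists>e e'. is_basis_over (Fsub q) s e \<and> is_basis_over (Fsub q) s e' \<and>
        (\<forall>i<s. \<forall>j<s. trace q s (e i * e' j) = (if i = j then 1 else 0)) \<and>
        (\<forall>i<s. \<forall>j<s. dotp n (\<pi> (e i)) (\<pi> (e' j)) = (if i = j then 1 else 0)))"

definition d_max_iso :: "nat \<Rightarrow> nat \<Rightarrow> nat \<Rightarrow> 'K::field itself \<Rightarrow> nat" where
  "d_max_iso q s n (_::'K itself) =
     Sup {min_dist n (range \<pi>) | \<pi> :: 'K \<Rightarrow> nat \<Rightarrow> 'K. is_isometry q s n \<pi>}"

text \<open>Symmetric tridiagonal Toeplitz matrix T_N(a,b) (indices 0..N-1).\<close>
definition Tmat :: "nat \<Rightarrow> 'K::field \<Rightarrow> 'K \<Rightarrow> nat \<Rightarrow> nat \<Rightarrow> 'K" where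
  "Tmat N a b i j = (if i < N \<and> j < N then
      (if i = j then a else if i = j + 1 \<or> j = i + 1 then b else 0) else 0)"

text \<open>Generator matrix [I_N | T_N(a,b)], N rows and 2N columns.\<close>
definition genmat :: "nat \<Rightarrow> 'K::field \<Rightarrow> 'K \<Rightarrow> nat \<Rightarrow> nat \<Rightarrow> 'K" where
  "genmat N a b i j = (if i < N \<and> j < N then (if i = j then 1 else 0)
      else if i < N \<and> N \<le> j \<and> j < 2 * N then Tmat N a b i (j - N) else 0)"

definition Chat :: "nat \<Rightarrow> 'K::field \<Rightarrow> 'K \<Rightarrow> (nat \<Rightarrow> 'K) set" where
  "Chat N a b = {(\<lambda>j. \<Sum>i<N. u i * genmat N a b i j) | u. True}"

text \<open>pi^{(x)2N}: (c_1..c_2N) maps to (pi c_1, ..., pi c_2N).\<close>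
definition pi_ext :: "nat \<Rightarrow> nat \<Rightarrow> ('K::field \<Rightarrow> nat \<Rightarrow> 'K) \<Rightarrow> (nat \<Rightarrow> 'K) \<Rightarrow> (nat \<Rightarrow> 'K)" where
  "pi_ext n N \<pi> c = (\<lambda>k. if k < 2 * N * n then \<pi> (c (k div n)) (k mod n) else 0)"

end

theory Submission
  imports Defs "HOL-Number_Theory.Residues" "HOL-Computational_Algebra.Polynomial"
begin

lemma char2:
  assumes "card (UNIV :: 'K::{field,finite} set) = 2 ^ k"
  shows "(2::'K) = 0"
proof -
  have fin: "finite (UNIV::'K set)" by simp
  have p: "prime CHAR('K)" using prime_CHAR_semidom[where ?'a='K] finite_imp_CHAR_pos[OF fin] by blast
  have "CHAR('K) dvd 2 ^ k" using CHAR_dvd_CARD[where ?'a='K] assms by simp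
  then have "CHAR('K) dvd 2" using p prime_dvd_power by blast
  then have "CHAR('K) = 2" using p by (simp add: primes_dvd_imp_eq)
  then show ?thesis by (metis of_nat_CHAR of_nat_numeral)
qed

lemma c2_add_self: "(2::'a::comm_ring_1) = 0 \<Longrightarrow> x + x = (0::'a)"
  by (metis mult_2 mult_zero_left)

lemma c2_neg: "(2::'a::comm_ring_1) = 0 \<Longrightarrow> - x = (x::'a)"
  by (metis add_eq_0_iff c2_add_self)

lemma c2_sum0: "(2::'a::comm_ring_1) = 0 \<Longrightarrow> (x + y = (0::'a)) \<longleftrightarrow> x = y"
  by (metis add_eq_0_iff c2_neg)

lemma frob2: "(2::'a::comm_ring_1) = 0 \<Longrightarrow> (x + y) ^ 2 = x ^ 2 + (y::'a) ^ 2"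
  by (simp add: power2_sum)

lemma frob: "(2::'a::comm_ring_1) = 0 \<Longrightarrow> (x + y) ^ (2 ^ k) = x ^ (2 ^ k) + (y::'a) ^ (2 ^ k)"
proof (induction k)
  case 0 then show ?case by simp
next
  case (Suc k)
  have "(x + y) ^ (2 ^ Suc k) = ((x + y) ^ (2 ^ k)) ^ 2" by (simp only: power_Suc2 power_mult)
  also have "\<dots> = (x ^ (2 ^ k) + y ^ (2 ^ k)) ^ 2" using Suc by simp
  also have "\<dots> = (x ^ (2 ^ k)) ^ 2 + (y ^ (2 ^ k)) ^ 2" using frob2[OF Suc.prems] by blast
  also have "\<dots> = x ^ (2 ^ Suc k) + y ^ (2 ^ Suc k)" by (simp only: power_Suc2 power_mult)
  finally show ?case .
qed

lemma pow2_eq1: "(2::'a::field) = 0 \<Longrightarrow> (y::'a) ^ (2 ^ k) = 1 \<Longrightarrow> y = 1"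
proof -
  assume c: "(2::'a) = 0" and h: "y ^ (2 ^ k) = 1"
  have "(y + 1) ^ (2 ^ k) = y ^ (2 ^ k) + 1" using frob[OF c, of y 1 k] by simp
  also have "\<dots> = 0" using h c by simp
  finally have "y + 1 = 0" by simp
  then show "y = 1" using c2_sum0[OF c] by simp
qed

fun Dp :: "'a::comm_ring_1 \<Rightarrow> nat \<Rightarrow> 'a" where
  "Dp x 0 = 1"
| "Dp x (Suc 0) = x"
| "Dp x (Suc (Suc k)) = x * Dp x (Suc k) + Dp x k"

lemma Dp_to_ac: "to_ac (Dp x k) = Dp (to_ac x) k"
  by (induction x k rule: Dp.induct) simp_all

lemma Dp_zero_even: "Dp (0::'a::comm_ring_1) (2 * j) = 1"
  by (induction j) (simp_all add: numeral_2_eq_2)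

lemma Dp_cheb:
  assumes c: "(2::'a::field) = 0" and zw: "z * w = (1::'a)"
  shows "Dp (z + w) k * (z + w) = z ^ (k + 1) + w ^ (k + 1)"
proof -
  have "Dp (z + w) k * (z + w) = z ^ (k + 1) + w ^ (k + 1) \<and>
        Dp (z + w) (Suc k) * (z + w) = z ^ (k + 2) + w ^ (k + 2)"
  proof (induction k)
    case 0
    have "(z + w) * (z + w) = z^2 + w^2 + 2 * (z * w)" by (simp add: algebra_simps power2_eq_square)
    then show ?case using c by (simp add: power2_eq_square)
  next
    case (Suc k)
    have "Dp (z + w) (Suc (Suc k)) * (z + w) = (z + w) * (Dp (z + w) (Suc k) * (z + w)) + Dp (z + w) k * (z + w)"
      by (simp add: algebra_simps)
    also have "\<dots> = (z + w) * (z ^ (k + 2) + w ^ (k + 2)) + (z ^ (k + 1) + w ^ (k + 1))"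
      using Suc by simp
    also have "\<dots> = z ^ (k + 3) + w ^ (k + 3) + (z * w) * (z ^ (k+1) + w ^ (k+1)) + (z ^ (k + 1) + w ^ (k + 1))"
      by (simp add: algebra_simps power_Suc numeral_3_eq_3 numeral_2_eq_2)
    also have "\<dots> = z ^ (k + 3) + w ^ (k + 3) + 2 * (z ^ (k + 1) + w ^ (k + 1))"
      using zw by simp
    also have "\<dots> = z ^ (Suc k + 2) + w ^ (Suc k + 2)" using c by (simp add: numeral_3_eq_3 numeral_2_eq_2)
    finally show ?case using Suc by simp
  qed
  then show ?thesis by simp
qed

lemma roots_unity:
  fixes \<theta> z :: "'a::field"
  assumes prim: "\<theta> ^ (m + 1) = 1" "\<forall>k. 0 < k \<and> k < m + 1 \<longrightarrow> \<theta> ^ k \<noteq> 1"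
    and z: "z ^ (m + 1) = 1"
  shows "\<exists>j\<le>m. z = \<theta> ^ j"
proof -
  define p :: "'a poly" where "p = monom 1 (m + 1) - 1"
  have pz: "poly p u = u ^ (m + 1) - 1" for u by (simp add: p_def poly_monom)
  have dp: "degree p \<le> m + 1" unfolding p_def by (intro degree_diff_le) (auto simp: degree_monom_le)
  have "coeff p (m + 1) = 1" by (simp add: p_def)
  then have pn: "p \<noteq> 0" by auto
  define R where "R = {u. poly p u = 0}"
  have finR: "finite R" unfolding R_def using poly_roots_finite[OF pn] .
  have cR: "card R \<le> m + 1" unfolding R_def using card_poly_roots_bound[OF pn] dp by linarith
  define S where "S = (\<lambda>j. \<theta> ^ j) ` {..m}"
  have inj: "inj_on (\<lambda>j. \<theta> ^ j) {..m}"
  proof (rule inj_onI)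
    fix i j assume i: "i \<in> {..m}" and j: "j \<in> {..m}" and e: "\<theta> ^ i = \<theta> ^ j"
    have t0: "\<theta> \<noteq> 0" using prim(1) by auto
    show "i = j"
    proof (rule ccontr)
      assume "i \<noteq> j"
      then consider "i < j" | "j < i" by linarith
      then show False
      proof cases
        case 1
        have "\<theta> ^ j = \<theta> ^ i * \<theta> ^ (j - i)" using 1 by (simp add: power_add[symmetric])
        then have "\<theta> ^ (j - i) = 1" using e t0 by simp
        then show False using prim(2) 1 j by auto
      next
        case 2
        have "\<theta> ^ i = \<theta> ^ j * \<theta> ^ (i - j)" using 2 by (simp add: power_add[symmetric])
        then have "\<theta> ^ (i - j) = 1" using e t0 by simp
        then show False using prim(2) 2 i by auto
      qed
    qed
  qed
  have cS: "card S = m + 1" unfolding S_def using card_image[OF inj] by simp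
  have SR: "S \<subseteq> R"
  proof
    fix u assume "u \<in> S"
    then obtain j where u: "u = \<theta> ^ j" by (auto simp: S_def)
    have "u ^ (m + 1) = (\<theta> ^ (m + 1)) ^ j" unfolding u by (metis power_mult mult.commute)
    then show "u \<in> R" using prim(1) by (simp add: R_def pz)
  qed
  have "S = R" using card_subset_eq[OF finR SR] cS cR by (metis SR card_mono finR le_antisym)
  moreover have "z \<in> R" using z by (simp add: R_def pz)
  ultimately show ?thesis by (auto simp: S_def)
qed

lemma Dp_root_char:
  fixes x \<theta> :: "'a::alg_closed_field"
  assumes c: "(2::'a) = 0"
    and prim: "\<theta> ^ (m + 1) = 1" "\<forall>k. 0 < k \<and> k < m + 1 \<longrightarrow> \<theta> ^ k \<noteq> 1"
    and odd: "odd (m + 1)" and NN: "N + 1 = 2 ^ r * (m + 1)"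
    and x0: "x \<noteq> 0" and D: "Dp x N = 0"
  shows "\<exists>j. 1 \<le> j \<and> 2 * j \<le> m \<and> x = \<theta> ^ j + inverse (\<theta> ^ j)"
proof -
  define f where "f = (\<lambda>k::nat. if k = 1 then x else (1::'a))"
  have "\<exists>z. (\<Sum>k\<le>2. f k * z ^ k) = 0" by (rule alg_closed) (auto simp: f_def)
  then obtain z where "(\<Sum>k\<le>2. f k * z ^ k) = 0" by blast
  then have zq: "1 + x * z + z ^ 2 = 0" by (simp add: numeral_2_eq_2 f_def)
  have z0: "z \<noteq> 0" using zq by auto
  define w where "w = inverse z"
  have zw: "z * w = 1" using z0 by (simp add: w_def)
  have "(1 + x * z + z ^ 2) * w = 0" using zq by simp
  moreover have "(1 + x * z + z ^ 2) * w = w + x * (z * w) + z * (z * w)" by (simp add: algebra_simps power2_eq_square)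
  ultimately have "w + x + z = 0" using zw by simp
  then have xzw: "x = z + w" using c2_sum0[OF c, of x "z + w"] c2_neg[OF c] by (simp add: algebra_simps)
  have "Dp (z + w) N * (z + w) = z ^ (N + 1) + w ^ (N + 1)" by (rule Dp_cheb[OF c zw])
  then have "z ^ (N + 1) + w ^ (N + 1) = 0" using D xzw by simp
  then have e: "z ^ (N + 1) = w ^ (N + 1)" using c2_sum0[OF c] by simp
  have "z ^ (N + 1) * z ^ (N + 1) = w ^ (N + 1) * z ^ (N + 1)" using e by simp
  also have "\<dots> = (z * w) ^ (N + 1)" by (simp only: power_mult_distrib mult.commute)
  also have "\<dots> = 1" by (simp add: zw)
  finally have "z ^ (2 * (N + 1)) = 1" by (metis mult_2 power_add)
  moreover have "(m + 1) * 2 ^ (r + 1) = 2 * (N + 1)" using NN by simp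
  ultimately have "(z ^ (m + 1)) ^ (2 ^ (r + 1)) = 1" by (metis power_mult)
  then have zm: "z ^ (m + 1) = 1" by (rule pow2_eq1[OF c])
  obtain j where j: "j \<le> m" "z = \<theta> ^ j" using roots_unity[OF prim zm] by blast
  have j0: "j \<noteq> 0"
  proof
    assume "j = 0"
    then have "z = 1" "w = 1" using j by (auto simp: w_def)
    then have "x = 2" using xzw by simp
    then show False using x0 c by simp
  qed
  have t0: "\<theta> \<noteq> 0" using prim(1) by auto
  show ?thesis
  proof (cases "2 * j \<le> m")
    case True
    then show ?thesis using j j0 xzw by (intro exI[of _ j]) (auto simp: w_def)
  next
    case False
    define j' where "j' = m + 1 - j"
    have "2 * j \<noteq> m + 1" using odd by (metis even_mult_iff even_numeral)
    then have j'1: "1 \<le> j'" "2 * j' \<le> m" using False j by (auto simp: j'_def)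
    have "\<theta> ^ j' * \<theta> ^ j = 1" using prim(1) j by (simp add: j'_def power_add[symmetric])
    then have "\<theta> ^ j' = inverse (\<theta> ^ j)" "inverse (\<theta> ^ j') = \<theta> ^ j"
      by (simp_all add: inverse_unique field_simps t0)
    then show ?thesis using j'1 xzw j by (intro exI[of _ j']) (auto simp: w_def add.commute)
  qed
qed

lemma sum_split_add: fixes m n :: nat shows "(\<Sum>i<m + n. f i) = (\<Sum>i<m. f i) + (\<Sum>i<n. f (m + i))"
  by (induction n) (simp_all add: ac_simps)

lemma block_sum: fixes M n :: nat shows "(\<Sum>k<M * n. f k) = (\<Sum>j<M. \<Sum>l<n. f (j * n + l))"
proof (induction M)
  case 0 then show ?case by simp
next
  case (Suc M)
  have "(\<Sum>k<Suc M * n. f k) = (\<Sum>k<M * n + n. f k)" by (simp add: add.commute)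
  also have "\<dots> = (\<Sum>k<M * n. f k) + (\<Sum>l<n. f (M * n + l))" by (rule sum_split_add)
  finally show ?case using Suc by simp
qed

definition cw :: "nat \<Rightarrow> 'K::field \<Rightarrow> 'K \<Rightarrow> (nat \<Rightarrow> 'K) \<Rightarrow> nat \<Rightarrow> 'K" where
  "cw N a b u = (\<lambda>j. \<Sum>i<N. u i * genmat N a b i j)"

definition Tv :: "nat \<Rightarrow> 'K::field \<Rightarrow> 'K \<Rightarrow> (nat \<Rightarrow> 'K) \<Rightarrow> nat \<Rightarrow> 'K" where
  "Tv N a b u k = (\<Sum>i<N. Tmat N a b k i * u i)"

lemma Chat_cw: "Chat N a b = range (cw N a b)"
  unfolding Chat_def cw_def by auto

lemma Tmat_sym: "Tmat N a b i j = Tmat N a b j i"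
  unfolding Tmat_def by auto

lemma cw_low: "j < N \<Longrightarrow> cw N a b u j = u j"
proof -
  assume j: "j < N"
  have "cw N a b u j = (\<Sum>i<N. if i = j then u i else 0)"
    unfolding cw_def by (rule sum.cong) (auto simp: genmat_def j)
  also have "\<dots> = u j" using j by simp
  finally show ?thesis .
qed

lemma cw_high: "N \<le> j \<Longrightarrow> j < 2 * N \<Longrightarrow> cw N a b u j = Tv N a b u (j - N)"
  unfolding cw_def Tv_def by (rule sum.cong) (auto simp: genmat_def Tmat_sym mult.commute)

lemma cw_out: "2 * N \<le> j \<Longrightarrow> cw N a b u j = 0"
  unfolding cw_def by (rule sum.neutral) (auto simp: genmat_def)

lemma cw_add: "cw N a b (\<lambda>i. u i + w i) = (\<lambda>j. cw N a b u j + cw N a b w j)"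
  unfolding cw_def by (auto simp: algebra_simps sum.distrib)

lemma cw_smult: "cw N a b (\<lambda>i. c * u i) = (\<lambda>j. c * cw N a b u j)"
  unfolding cw_def by (auto simp: algebra_simps sum_distrib_left)

lemma cw_zero: "cw N a b (\<lambda>i. 0) = (\<lambda>j. 0)"
  unfolding cw_def by simp

lemma cw_sum: "finite A \<Longrightarrow> cw N a b (\<lambda>i. \<Sum>k\<in>A. U k i) = (\<lambda>j. \<Sum>k\<in>A. cw N a b (U k) j)"
  unfolding cw_def by (auto simp: sum_distrib_right intro!: ext sum.swap)

lemma cw_cong: "(\<And>i. i < N \<Longrightarrow> u i = w i) \<Longrightarrow> cw N a b u = cw N a b w"
  unfolding cw_def by auto

lemma Tv_explicit:
  assumes k: "k < N"
  shows "Tv N a b u k = a * u k + (if 0 < k then b * u (k - 1) else 0) + (if k + 1 < N then b * u (k + 1) else 0)"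
proof -
  have "Tv N a b u k = (\<Sum>i<N. (if i = k then a * u i else 0) + (if i = k + 1 then b * u i else 0)
        + (if i + 1 = k then b * u i else 0))"
    unfolding Tv_def by (rule sum.cong) (auto simp: Tmat_def k)
  also have "\<dots> = a * u k + (if k + 1 < N then b * u (k + 1) else 0) + (\<Sum>i<N. if i = k - 1 \<and> 0 < k then b * u i else 0)"
    using k by (simp add: sum.distrib) (rule sum.cong, auto)
  also have "(\<Sum>i<N. if i = k - 1 \<and> 0 < k then b * u i else 0) = (if 0 < k then b * u (k - 1) else 0)"
    using k by (cases "0 < k") auto
  finally show ?thesis by (simp add: ac_simps)
qed

lemma dotp_cw: "dotp (2 * N) (cw N a b u) (cw N a b w) =
   (\<Sum>k<N. u k * w k) + (\<Sum>k<N. Tv N a b u k * Tv N a b w k)"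
proof -
  have "dotp (2 * N) (cw N a b u) (cw N a b w) = (\<Sum>k<N + N. cw N a b u k * cw N a b w k)"
    by (simp add: dotp_def mult_2)
  also have "\<dots> = (\<Sum>k<N. cw N a b u k * cw N a b w k) + (\<Sum>k<N. cw N a b u (N + k) * cw N a b w (N + k))"
    by (rule sum_split_add)
  also have "(\<Sum>k<N. cw N a b u k * cw N a b w k) = (\<Sum>k<N. u k * w k)"
    by (rule sum.cong) (auto simp: cw_low)
  also have "(\<Sum>k<N. cw N a b u (N + k) * cw N a b w (N + k)) = (\<Sum>k<N. Tv N a b u k * Tv N a b w k)"
    by (rule sum.cong) (auto simp: cw_high)
  finally show ?thesis .
qed

lemma tri_nonsing:
  fixes a' b :: "'K::field"
  assumes c: "(2::'K) = 0" and b0: "b \<noteq> 0" and N2: "N \<ge> 2" and D: "Dp (a' / b) N \<noteq> 0"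
    and h: "\<forall>k<N. Tv N a' b u k = 0"
  shows "\<forall>k<N. u k = 0"
proof -
  define x where "x = a' / b"
  have a': "a' = x * b" using b0 by (simp add: x_def)
  have eq: "a' * u k + (if 0 < k then b * u (k - 1) else 0) + (if k + 1 < N then b * u (k + 1) else 0) = 0"
    if "k < N" for k using h that Tv_explicit[OF that, of a' b u] by simp
  have P: "k + 1 < N \<longrightarrow> u k = u 0 * Dp x k \<and> u (k + 1) = u 0 * Dp x (k + 1)" for k
  proof (induction k)
    case 0
    have "a' * u 0 + b * u 1 = 0" using eq[of 0] N2 by simp
    then have "b * u 1 = a' * u 0" using c2_sum0[OF c] by (simp add: add.commute)
    then have "u 1 = x * u 0" using b0 a' by (simp add: field_simps)
    then show ?case by (simp add: mult.commute)
  next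
    case (Suc k)
    show ?case
    proof
      assume k: "Suc k + 1 < N"
      then have IH: "u k = u 0 * Dp x k" "u (k + 1) = u 0 * Dp x (k + 1)" using Suc by auto
      have "a' * u (k + 1) + b * u k + b * u (k + 2) = 0" using eq[of "k + 1"] k by simp
      then have "b * u (k + 2) = a' * u (k + 1) + b * u k" using c2_sum0[OF c] by (simp add: add.commute)
      then have "b * u (k + 2) = b * (x * u (k + 1) + u k)" using a' by (simp add: algebra_simps)
      then have "u (k + 2) = x * u (k + 1) + u k" using b0 by simp
      then have "u (k + 2) = u 0 * Dp x (k + 2)" using IH by (simp add: algebra_simps numeral_2_eq_2)
      then show "u (Suc k) = u 0 * Dp x (Suc k) \<and> u (Suc k + 1) = u 0 * Dp x (Suc k + 1)"
        using IH by simp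
    qed
  qed
  obtain M where M: "N = M + 2" using N2 by (metis add.commute le_Suc_ex)
  have PM: "u M = u 0 * Dp x M" "u (M + 1) = u 0 * Dp x (M + 1)" using P[of M] M by auto
  have "a' * u (M + 1) + b * u M = 0" using eq[of "M + 1"] M by simp
  then have "b * (u 0 * (x * Dp x (M + 1) + Dp x M)) = 0" using PM a' by (simp add: algebra_simps)
  then have "u 0 * Dp x N = 0" using b0 M by (simp add: numeral_2_eq_2)
  then have u0: "u 0 = 0" using D by (simp add: x_def)
  show ?thesis
  proof (intro allI impI)
    fix k assume k: "k < N"
    show "u k = 0"
    proof (cases "k + 1 < N")
      case True then show ?thesis using P[of k] u0 by simp
    next
      case False
      then have "k = M + 1" using k M by simp
      then show ?thesis using PM u0 by simp
    qed
  qed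
qed

lemma Tv_shift:
  assumes k: "k < N"
  shows "Tv N (a + 1) b u k = Tv N a b u k + u k"
proof -
  have "Tv N (a + 1) b u k = (\<Sum>i<N. Tmat N a b k i * u i + (if i = k then u i else 0))"
    unfolding Tv_def by (rule sum.cong) (auto simp: Tmat_def k algebra_simps)
  then show ?thesis using k by (simp add: sum.distrib Tv_def)
qed

lemma Tv_cong: "(\<And>i. i < N \<Longrightarrow> u i = w i) \<Longrightarrow> Tv N a b u k = Tv N a b w k"
  unfolding Tv_def by auto

lemma Tv_add: "Tv N a b (\<lambda>i. u i + w i) k = Tv N a b u k + Tv N a b w k"
  unfolding Tv_def by (simp add: algebra_simps sum.distrib)

lemma Chat_LCD_K:
  fixes a b :: "'K::field"
  assumes c: "(2::'K) = 0" and b0: "b \<noteq> 0" and N2: "N \<ge> 2" and D: "Dp ((a + 1) / b) N \<noteq> 0"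
    and orth: "\<forall>w. dotp (2 * N) (cw N a b u) (cw N a b w) = 0"
  shows "cw N a b u = (\<lambda>j. 0)"
proof -
  have e1: "u k + Tv N a b (Tv N a b u) k = 0" if k: "k < N" for k
  proof -
    define w where "w = (\<lambda>i. if i = k then (1::'K) else 0)"
    have Tw: "Tv N a b w l = Tmat N a b l k" for l
    proof -
      have "Tv N a b w l = (\<Sum>i<N. if i = k then Tmat N a b l i else 0)"
        unfolding Tv_def w_def by (rule sum.cong) auto
      then show ?thesis using k by simp
    qed
    have "0 = dotp (2 * N) (cw N a b u) (cw N a b w)" using orth by simp
    also have "\<dots> = (\<Sum>l<N. u l * w l) + (\<Sum>l<N. Tv N a b u l * Tmat N a b l k)"
      by (simp add: dotp_cw Tw)
    also have "(\<Sum>l<N. u l * w l) = (\<Sum>l<N. if l = k then u l else 0)"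
      by (rule sum.cong) (auto simp: w_def)
    also have "\<dots> = u k" using k by simp
    also have "(\<Sum>l<N. Tv N a b u l * Tmat N a b l k) = Tv N a b (Tv N a b u) k"
      unfolding Tv_def[of N a b "Tv N a b u"] by (rule sum.cong) (auto simp: Tmat_sym mult.commute)
    finally show ?thesis by simp
  qed
  define v where "v = (\<lambda>i. Tv N (a + 1) b u i)"
  have "Tv N (a + 1) b v k = 0" if k: "k < N" for k
  proof -
    have "Tv N (a + 1) b v k = Tv N a b v k + v k" by (rule Tv_shift[OF k])
    also have "Tv N a b v k = Tv N a b (\<lambda>i. Tv N a b u i + u i) k"
      by (rule Tv_cong) (simp add: v_def Tv_shift)
    also have "\<dots> = Tv N a b (Tv N a b u) k + Tv N a b u k" by (rule Tv_add)
    also have "v k = Tv N a b u k + u k" by (simp add: v_def Tv_shift k)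
    finally have "Tv N (a + 1) b v k = (u k + Tv N a b (Tv N a b u) k) + (Tv N a b u k + Tv N a b u k)"
      by (simp add: algebra_simps)
    then show ?thesis using e1[OF k] c2_add_self[OF c] by simp
  qed
  then have "\<forall>k<N. v k = 0" using tri_nonsing[OF c b0 N2 D] by blast
  then have "\<forall>k<N. u k = 0" using tri_nonsing[OF c b0 N2 D] by (simp add: v_def)
  then have "cw N a b u = cw N a b (\<lambda>i. 0)" by (intro cw_cong) simp
  then show ?thesis by (simp add: cw_zero)
qed

lemma Dp_nonzero:
  fixes a b :: "'K::field" and \<theta> :: "'K alg_closure"
  assumes c: "(2::'K) = 0" and b_nz: "b \<noteq> 0"
    and r_exact: "\<not> 2 ^ (r + 1) dvd N + 1"
    and m_def: "N + 1 = 2 ^ r * (m + 1)"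
    and theta_prim: "\<theta> ^ (m + 1) = 1" "\<forall>k. 0 < k \<and> k < m + 1 \<longrightarrow> \<theta> ^ k \<noteq> 1"
    and cond0: "r = 0 \<Longrightarrow> to_ac (a / b) \<notin>
        {to_ac (1 / b) + \<theta> ^ i + inverse (\<theta> ^ i) | i. 1 \<le> i \<and> 2 * i \<le> m}"
    and cond1: "r \<ge> 1 \<Longrightarrow> m = 0 \<Longrightarrow> a \<noteq> 1"
    and cond2: "r \<ge> 1 \<Longrightarrow> m \<ge> 1 \<Longrightarrow> to_ac (a / b) \<notin>
        {to_ac (1 / b)} \<union> {to_ac (1 / b) + \<theta> ^ i + inverse (\<theta> ^ i) | i. 1 \<le> i \<and> 2 * i \<le> m}"
  shows "Dp ((a + 1) / b) N \<noteq> 0"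
proof
  assume DN: "Dp ((a + 1) / b) N = 0"
  define x where "x = (a + 1) / b"
  have odd: "odd (m + 1)"
  proof
    assume "even (m + 1)"
    then obtain k where "m + 1 = 2 * k" by blast
    then have "N + 1 = 2 ^ (r + 1) * k" using m_def by simp
    then show False using r_exact by simp
  qed
  have ab: "a / b = x + 1 / b"
  proof -
    have "a / b = (a + 1) / b - 1 / b" by (simp add: add_divide_distrib)
    then show ?thesis using c2_neg[OF c] by (simp add: x_def)
  qed
  show False
  proof (cases "x = 0")
    case True
    then have "a + 1 = 0" using b_nz by (simp add: x_def)
    then have a1: "a = 1" using c2_sum0[OF c] by simp
    show False
    proof (cases "r = 0")
      case True
      then have "odd (N + 1)" using m_def odd by simp
      then obtain j where "N = 2 * j" by (metis evenE odd_add odd_one)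
      then have "Dp (0::'K) N = 1" by (simp add: Dp_zero_even)
      then show False using DN \<open>x = 0\<close> unfolding x_def by simp
    next
      case False
      then have r1: "r \<ge> 1" by simp
      show False
      proof (cases "m = 0")
        case True then show False using cond1[OF r1] a1 by simp
      next
        case False then show False using cond2[OF r1] a1 by simp
      qed
    qed
  next
    case False
    have c': "(2::'K alg_closure) = 0" using arg_cong[OF c, of to_ac] by simp
    have X0: "to_ac x \<noteq> 0" using False by simp
    have "Dp (to_ac x) N = 0" using DN arg_cong[OF DN, of to_ac] unfolding x_def Dp_to_ac[symmetric] by simp
    then obtain j where j: "1 \<le> j" "2 * j \<le> m" "to_ac x = \<theta> ^ j + inverse (\<theta> ^ j)"
      using Dp_root_char[OF c' theta_prim odd m_def X0] by blast
    have mem: "to_ac (a / b) = to_ac (1 / b) + \<theta> ^ j + inverse (\<theta> ^ j)"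
      using j(3) by (simp add: ab add_ac del: to_ac_divide)
    show False
    proof (cases "r = 0")
      case True then show False using cond0 mem j by blast
    next
      case False
      then have "r \<ge> 1" "m \<ge> 1" using j by auto
      then show False using cond2 mem j by blast
    qed
  qed
qed

lemma Fsub_pow:
  assumes "c \<in> Fsub q" shows "c ^ (q ^ i) = c"
proof (induction i)
  case 0 then show ?case by simp
next
  case (Suc i)
  have "c ^ (q ^ Suc i) = (c ^ q) ^ (q ^ i)" by (simp add: power_mult)
  also have "\<dots> = c" using assms Suc by (simp add: Fsub_def)
  finally show ?case .
qed

lemma Fsub_mult: "c \<in> Fsub q \<Longrightarrow> d \<in> Fsub q \<Longrightarrow> c * d \<in> Fsub q"
  by (simp add: Fsub_def power_mult_distrib)

lemma Fsub_add:
  assumes c: "(2::'K::field) = 0" and q: "q = 2 ^ t"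
  shows "x \<in> Fsub q \<Longrightarrow> y \<in> Fsub q \<Longrightarrow> (x::'K) + y \<in> Fsub q"
  using frob[OF c, of x y t] by (simp add: Fsub_def q)

lemma trace_add:
  assumes c: "(2::'K::field) = 0" and q: "q = 2 ^ t"
  shows "trace q s (x + y) = trace q s x + trace q s (y::'K)"
proof -
  have "(x + y) ^ (q ^ i) = x ^ (q ^ i) + y ^ (q ^ i)" for i
    using frob[OF c, of x y "t * i"] by (simp add: q power_mult)
  then show ?thesis by (simp add: trace_def sum.distrib)
qed

lemma trace_zero:
  assumes "q > 0" shows "trace q s (0::'K::field) = 0"
  unfolding trace_def by (rule sum.neutral) (simp add: assms)

lemma trace_sum:
  assumes c: "(2::'K::field) = 0" and q: "q = 2 ^ t"
  shows "finite A \<Longrightarrow> trace q s (\<Sum>k\<in>A. f k) = (\<Sum>k\<in>A. trace q s (f k :: 'K))"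
proof (induction A rule: finite_induct)
  case empty
  have "q > 0" using q by simp
  then show ?case by (simp add: trace_zero)
next
  case (insert x F)
  then show ?case by (simp add: trace_add[OF c q])
qed

lemma trace_smult:
  assumes "c \<in> Fsub q" shows "trace q s (c * x) = c * trace q s (x::'K::field)"
  using Fsub_pow[OF assms] by (simp add: trace_def power_mult_distrib sum_distrib_left)

lemma pi_zero:
  assumes "Fq_linear_map q n \<pi>" shows "\<pi> 0 = (\<lambda>_. 0)"
proof
  fix j
  have "\<pi> (0 + 0) = (\<lambda>j. \<pi> 0 j + \<pi> 0 j)" using assms unfolding Fq_linear_map_def by blast
  then have "\<pi> 0 j + \<pi> 0 j = \<pi> 0 j + 0" by (metis add.right_neutral)
  then show "\<pi> 0 j = 0" by (simp only: add_left_cancel)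
qed

lemma pi_add:
  assumes "Fq_linear_map q n \<pi>" shows "\<pi> (x + y) j = \<pi> x j + \<pi> y j"
  using assms by (simp add: Fq_linear_map_def)

lemma pi_smult:
  assumes "Fq_linear_map q n \<pi>" "c \<in> Fsub q" shows "\<pi> (c * x) j = c * \<pi> x j"
  using assms by (simp add: Fq_linear_map_def smult_vec_def)

lemma pi_sum:
  assumes "Fq_linear_map q n \<pi>"
  shows "finite A \<Longrightarrow> \<pi> (\<Sum>k\<in>A. f k) j = (\<Sum>k\<in>A. \<pi> (f k) j)"
  by (induction A rule: finite_induct) (simp_all add: pi_zero[OF assms] pi_add[OF assms])

lemma pi_vals:
  assumes "Fq_linear_map q n \<pi>"
  shows "j < n \<Longrightarrow> \<pi> x j \<in> Fsub q" "n \<le> j \<Longrightarrow> \<pi> x j = 0"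
  using assms unfolding Fq_linear_map_def vecs_def by auto

lemma dotp_sums:
  "dotp n (\<lambda>j. \<Sum>i\<in>I. c i * f i j) (\<lambda>j. \<Sum>l\<in>L. d l * g l j) =
   (\<Sum>i\<in>I. \<Sum>l\<in>L. c i * d l * dotp n (f i) (g l))"
proof -
  have "dotp n (\<lambda>j. \<Sum>i\<in>I. c i * f i j) (\<lambda>j. \<Sum>l\<in>L. d l * g l j) =
      (\<Sum>j<n. \<Sum>i\<in>I. \<Sum>l\<in>L. c i * d l * (f i j * g l j))"
    unfolding dotp_def sum_product by (simp add: mult_ac)
  also have "\<dots> = (\<Sum>i\<in>I. \<Sum>j<n. \<Sum>l\<in>L. c i * d l * (f i j * g l j))" by (rule sum.swap)
  also have "\<dots> = (\<Sum>i\<in>I. \<Sum>l\<in>L. \<Sum>j<n. c i * d l * (f i j * g l j))" by (simp add: sum.swap[of _ "{..<n}"])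
  also have "\<dots> = (\<Sum>i\<in>I. \<Sum>l\<in>L. c i * d l * dotp n (f i) (g l))"
    by (simp add: dotp_def sum_distrib_left)
  finally show ?thesis .
qed

lemma iso_form:
  fixes \<pi> :: "'K::field \<Rightarrow> nat \<Rightarrow> 'K"
  assumes c: "(2::'K) = 0" and q: "q = 2 ^ t" and iso: "is_isometry q s n \<pi>"
  shows "dotp n (\<pi> x) (\<pi> y) = trace q s (x * y)"
proof -
  have lin: "Fq_linear_map q n \<pi>" using iso by (simp add: is_isometry_def)
  obtain e e' where B: "is_basis_over (Fsub q) s e" "is_basis_over (Fsub q) s e'"
    and tr: "\<forall>i<s. \<forall>j<s. trace q s (e i * e' j) = (if i = j then 1 else 0)"
    and dp: "\<forall>i<s. \<forall>j<s. dotp n (\<pi> (e i)) (\<pi> (e' j)) = (if i = j then 1 else 0)"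
    using iso unfolding is_isometry_def by blast
  obtain cx where cx: "\<forall>i<s. cx i \<in> Fsub q" "x = (\<Sum>i<s. cx i * e i)" using B(1) unfolding is_basis_over_def by blast
  obtain cy where cy: "\<forall>i<s. cy i \<in> Fsub q" "y = (\<Sum>i<s. cy i * e' i)" using B(2) unfolding is_basis_over_def by blast
  have px: "\<pi> x = (\<lambda>j. \<Sum>i<s. cx i * \<pi> (e i) j)"
  proof
    fix j
    have "\<pi> x j = (\<Sum>i<s. \<pi> (cx i * e i) j)" unfolding cx(2) by (rule pi_sum[OF lin]) simp
    also have "\<dots> = (\<Sum>i<s. cx i * \<pi> (e i) j)" by (rule sum.cong) (simp_all add: pi_smult[OF lin] cx(1))
    finally show "\<pi> x j = (\<Sum>i<s. cx i * \<pi> (e i) j)" .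
  qed
  have py: "\<pi> y = (\<lambda>j. \<Sum>i<s. cy i * \<pi> (e' i) j)"
  proof
    fix j
    have "\<pi> y j = (\<Sum>i<s. \<pi> (cy i * e' i) j)" unfolding cy(2) by (rule pi_sum[OF lin]) simp
    also have "\<dots> = (\<Sum>i<s. cy i * \<pi> (e' i) j)" by (rule sum.cong) (simp_all add: pi_smult[OF lin] cy(1))
    finally show "\<pi> y j = (\<Sum>i<s. cy i * \<pi> (e' i) j)" .
  qed
  have "dotp n (\<pi> x) (\<pi> y) = (\<Sum>i<s. \<Sum>l<s. cx i * cy l * dotp n (\<pi> (e i)) (\<pi> (e' l)))"
    unfolding px py by (rule dotp_sums)
  also have "\<dots> = (\<Sum>i<s. \<Sum>l<s. cx i * cy l * trace q s (e i * e' l))"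
    by (intro sum.cong refl) (simp add: tr dp)
  also have "\<dots> = (\<Sum>i<s. \<Sum>l<s. trace q s ((cx i * cy l) * (e i * e' l)))"
    by (intro sum.cong refl) (simp add: trace_smult Fsub_mult cx(1) cy(1))
  also have "\<dots> = (\<Sum>i<s. trace q s (\<Sum>l<s. (cx i * cy l) * (e i * e' l)))"
    by (intro sum.cong refl) (rule trace_sum[OF c q finite_lessThan, symmetric])
  also have "\<dots> = trace q s (\<Sum>i<s. \<Sum>l<s. (cx i * cy l) * (e i * e' l))"
    by (rule trace_sum[OF c q finite_lessThan, symmetric])
  also have "(\<Sum>i<s. \<Sum>l<s. (cx i * cy l) * (e i * e' l)) = x * y"
    unfolding cx(2) cy(2) sum_product by (simp add: mult_ac)
  finally show ?thesis .
qed

lemma iso_nondeg: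
  fixes \<pi> :: "'K::field \<Rightarrow> nat \<Rightarrow> 'K"
    and S :: 'K
  assumes iso: "is_isometry q s n \<pi>" and s: "s > 0" and S: "S \<noteq> 0"
  shows "\<exists>l. trace q s (l * S) \<noteq> 0"
proof -
  obtain e e' where B: "is_basis_over (Fsub q) s e" "is_basis_over (Fsub q) s e'"
    and tr: "\<forall>i<s. \<forall>j<s. trace q s (e i * e' j) = (if i = j then 1 else 0)"
    and dp: "\<forall>i<s. \<forall>j<s. dotp n (\<pi> (e i)) (\<pi> (e' j)) = (if i = j then 1 else 0)"
    using iso unfolding is_isometry_def by blast
  have "(e 0 * e' 0 / S) * S = e 0 * e' 0" using S by simp
  moreover have "trace q s (e 0 * e' 0) = 1" using tr s by auto
  ultimately have "trace q s ((e 0 * e' 0 / S) * S) = 1" by simp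
  then show ?thesis by (intro exI[of _ "e 0 * e' 0 / S"]) simp
qed

lemma iso_inj0:
  fixes \<pi> :: "'K::field \<Rightarrow> nat \<Rightarrow> 'K"
  assumes c: "(2::'K) = 0" and q: "q = 2 ^ t" and iso: "is_isometry q s n \<pi>" and s: "s > 0"
    and z: "\<pi> x = (\<lambda>_. 0)"
  shows "x = 0"
proof (rule ccontr)
  assume "x \<noteq> 0"
  then obtain l where "trace q s (l * x) \<noteq> 0" using iso_nondeg[OF iso s] by blast
  moreover have "trace q s (l * x) = dotp n (\<pi> x) (\<pi> l)"
    using iso_form[OF c q iso] by (simp add: mult.commute)
  ultimately show False using z by (simp add: dotp_def)
qed

lemma iso_inj:
  fixes \<pi> :: "'K::field \<Rightarrow> nat \<Rightarrow> 'K"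
  assumes c: "(2::'K) = 0" and q: "q = 2 ^ t" and iso: "is_isometry q s n \<pi>" and s: "s > 0"
  shows "inj \<pi>"
proof (rule injI)
  fix x y assume e: "\<pi> x = \<pi> y"
  have lin: "Fq_linear_map q n \<pi>" using iso by (simp add: is_isometry_def)
  have "\<pi> (x - y) = (\<lambda>_. 0)"
  proof
    fix j have "\<pi> ((x - y) + y) j = \<pi> (x - y) j + \<pi> y j" by (rule pi_add[OF lin])
    then show "\<pi> (x - y) j = 0" using e by simp
  qed
  then have "x - y = 0" by (rule iso_inj0[OF c q iso s])
  then show "x = y" by simp
qed

lemma card_as_sum: fixes n :: nat shows "card {i. i < n \<and> P i} = (\<Sum>i<n. if P i then 1 else (0::nat))"
  using sum.inter_filter[of "{..<n}" "\<lambda>_. (1::nat)" P] by simp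

lemma hamming_sum: "hamming n x y = (\<Sum>i<n. if x i \<noteq> y i then 1 else (0::nat))"
  unfolding hamming_def by (rule card_as_sum)

lemma pe_at:
  assumes "j < 2 * N" "l < n"
  shows "pi_ext n N \<pi> c (j * n + l) = \<pi> (c j) l"
proof -
  have "j * n + l < 2 * N * n"
  proof -
    have "j * n + l < j * n + n" using assms by simp
    also have "\<dots> = (j + 1) * n" by simp
    also have "\<dots> \<le> 2 * N * n" using assms by (intro mult_right_mono) auto
    finally show ?thesis .
  qed
  moreover have "(j * n + l) div n = j" "(j * n + l) mod n = l" using assms by auto
  ultimately show ?thesis by (simp add: pi_ext_def)
qed

lemma pe_blocks:
  "(\<Sum>k<2 * n * N. f (pi_ext n N \<pi> c k) (pi_ext n N \<pi> c' k)) =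
   (\<Sum>j<2 * N. \<Sum>l<n. f (\<pi> (c j) l) (\<pi> (c' j) l))"
proof -
  have "(\<Sum>k<2 * n * N. f (pi_ext n N \<pi> c k) (pi_ext n N \<pi> c' k)) =
        (\<Sum>k<(2 * N) * n. f (pi_ext n N \<pi> c k) (pi_ext n N \<pi> c' k))" by (simp add: ac_simps)
  also have "\<dots> = (\<Sum>j<2 * N. \<Sum>l<n. f (pi_ext n N \<pi> c (j * n + l)) (pi_ext n N \<pi> c' (j * n + l)))"
    by (rule block_sum)
  also have "\<dots> = (\<Sum>j<2 * N. \<Sum>l<n. f (\<pi> (c j) l) (\<pi> (c' j) l))"
    by (intro sum.cong refl) (simp add: pe_at)
  finally show ?thesis .
qed

lemma dotp_pe: "dotp (2 * n * N) (pi_ext n N \<pi> c) (pi_ext n N \<pi> c') =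
   (\<Sum>j<2 * N. dotp n (\<pi> (c j)) (\<pi> (c' j)))"
  unfolding dotp_def by (rule pe_blocks)

lemma hamming_pe: "hamming (2 * n * N) (pi_ext n N \<pi> c) (pi_ext n N \<pi> c') =
   (\<Sum>j<2 * N. hamming n (\<pi> (c j)) (\<pi> (c' j)))"
  unfolding hamming_sum by (rule pe_blocks)

lemma pe_zero_imp:
  fixes \<pi> :: "'K::field \<Rightarrow> nat \<Rightarrow> 'K"
  assumes c2: "(2::'K) = 0" and q: "q = 2 ^ t" and iso: "is_isometry q s n \<pi>" and s: "s > 0"
    and z: "pi_ext n N \<pi> c = (\<lambda>_. 0)" and j: "j < 2 * N"
  shows "c j = 0"
proof -
  have lin: "Fq_linear_map q n \<pi>" using iso by (simp add: is_isometry_def)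
  have "\<pi> (c j) = (\<lambda>_. 0)"
  proof
    fix l
    show "\<pi> (c j) l = 0"
    proof (cases "l < n")
      case True
      then show ?thesis using pe_at[OF j True, of \<pi> c] z by simp
    next
      case False
      then show ?thesis using pi_vals(2)[OF lin] by simp
    qed
  qed
  then show ?thesis by (rule iso_inj0[OF c2 q iso s])
qed

lemma pe_lin_comb:
  fixes \<pi> :: "'K::field \<Rightarrow> nat \<Rightarrow> 'K"
  assumes lin: "Fq_linear_map q n \<pi>" and A: "finite A" and F: "\<forall>k\<in>A. a k \<in> Fsub q"
  shows "pi_ext n N \<pi> (\<lambda>j. \<Sum>k\<in>A. a k * v k j) = (\<lambda>i. \<Sum>k\<in>A. a k * pi_ext n N \<pi> (v k) i)"
proof
  fix i
  show "pi_ext n N \<pi> (\<lambda>j. \<Sum>k\<in>A. a k * v k j) i = (\<Sum>k\<in>A. a k * pi_ext n N \<pi> (v k) i)"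
  proof (cases "i < 2 * N * n")
    case True
    have "pi_ext n N \<pi> (\<lambda>j. \<Sum>k\<in>A. a k * v k j) i = (\<Sum>k\<in>A. \<pi> (a k * v k (i div n)) (i mod n))"
      using True by (simp add: pi_ext_def pi_sum[OF lin A])
    also have "\<dots> = (\<Sum>k\<in>A. a k * pi_ext n N \<pi> (v k) i)"
      using True F by (intro sum.cong refl) (simp add: pi_ext_def pi_smult[OF lin])
    finally show ?thesis .
  next
    case False then show ?thesis by (simp add: pi_ext_def)
  qed
qed

lemma pe_add:
  fixes \<pi> :: "'K::field \<Rightarrow> nat \<Rightarrow> 'K"
  assumes lin: "Fq_linear_map q n \<pi>"
  shows "pi_ext n N \<pi> (\<lambda>j. c j + c' j) = (\<lambda>i. pi_ext n N \<pi> c i + pi_ext n N \<pi> c' i)"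
  by (auto simp: pi_ext_def pi_add[OF lin])

lemma pe_smult:
  fixes \<pi> :: "'K::field \<Rightarrow> nat \<Rightarrow> 'K"
  assumes lin: "Fq_linear_map q n \<pi>" and a: "a \<in> Fsub q"
  shows "pi_ext n N \<pi> (\<lambda>j. a * c j) = smult_vec a (pi_ext n N \<pi> c)"
  by (auto simp: pi_ext_def pi_smult[OF lin a] smult_vec_def)

lemma pe_zero:
  fixes \<pi> :: "'K::field \<Rightarrow> nat \<Rightarrow> 'K"
  assumes lin: "Fq_linear_map q n \<pi>"
  shows "pi_ext n N \<pi> (\<lambda>j. 0) = (\<lambda>_. 0)"
  by (auto simp: pi_ext_def pi_zero[OF lin])

lemma pe_vecs:
  fixes \<pi> :: "'K::field \<Rightarrow> nat \<Rightarrow> 'K"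
  assumes lin: "Fq_linear_map q n \<pi>" and n: "n > 0"
  shows "pi_ext n N \<pi> c \<in> vecs (Fsub q) (2 * n * N)"
  unfolding vecs_def pi_ext_def using pi_vals(1)[OF lin] n by (auto simp: ac_simps)

lemma hamming_le: "hamming m x y \<le> m"
proof -
  have "{i. i < m \<and> x i \<noteq> y i} \<subseteq> {..<m}" by auto
  then have "card {i. i < m \<and> x i \<noteq> y i} \<le> card {..<m}" by (intro card_mono) auto
  then show ?thesis by (simp add: hamming_def)
qed

lemma hset_finite: "finite {hamming m x y | x y. x \<in> C \<and> y \<in> C \<and> x \<noteq> y}"
  by (rule finite_subset[of _ "{..m}"]) (auto simp: hamming_le)

lemma min_dist_le: "x \<in> C \<Longrightarrow> y \<in> C \<Longrightarrow> x \<noteq> y \<Longrightarrow> min_dist m C \<le> hamming m x y"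
  unfolding min_dist_def by (rule Min_le[OF hset_finite]) blast

lemma min_dist_ge:
  assumes "x0 \<in> C" "y0 \<in> C" "x0 \<noteq> y0"
    and "\<And>x y. x \<in> C \<Longrightarrow> y \<in> C \<Longrightarrow> x \<noteq> y \<Longrightarrow> B \<le> hamming m x y"
  shows "B \<le> min_dist m C"
  unfolding min_dist_def
proof (rule Min.boundedI[OF hset_finite])
  show "{hamming m x y |x y. x \<in> C \<and> y \<in> C \<and> x \<noteq> y} \<noteq> {}" using assms(1-3) by blast
next
  fix h assume "h \<in> {hamming m x y |x y. x \<in> C \<and> y \<in> C \<and> x \<noteq> y}"
  then show "B \<le> h" using assms(4) by blast
qed

lemma U_sum:
  fixes c :: "nat \<Rightarrow> 'K::field"
  assumes i: "i < N" and s: "s > 0"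
  shows "(\<Sum>k<s * N. c k * (if i = k div s then e (k mod s) else 0)) = (\<Sum>l<s. c (i * s + l) * e l)"
proof -
  have "(\<Sum>k<s * N. c k * (if i = k div s then e (k mod s) else 0)) =
        (\<Sum>k<N * s. c k * (if i = k div s then e (k mod s) else 0))" by (simp add: mult.commute)
  also have "\<dots> = (\<Sum>j<N. \<Sum>l<s. c (j * s + l) * (if i = (j * s + l) div s then e ((j * s + l) mod s) else 0))"
    by (rule block_sum)
  also have "\<dots> = (\<Sum>j<N. if j = i then (\<Sum>l<s. c (i * s + l) * e l) else 0)"
    by (intro sum.cong refl) auto
  also have "\<dots> = (\<Sum>l<s. c (i * s + l) * e l)" using i by simp
  finally show ?thesis .
qed

theorem theorem3p2:
  fixes q s n N r m t :: nat
    and \<pi> :: "'K::{field,finite} \<Rightarrow> nat \<Rightarrow> 'K"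
    and a b :: 'K
    and \<theta> :: "'K alg_closure"
  assumes q_pow2: "t \<ge> 1" "q = 2 ^ t"
    and card_K: "card (UNIV :: 'K set) = q ^ s"
    and s_ge: "s \<ge> 2" and n_ge: "n \<ge> s"
    and dmax: "d_max_iso q s n TYPE('K) \<ge> 1"
    and iso: "is_isometry q s n \<pi>"
    and d_opt: "min_dist n (range \<pi>) = d_max_iso q s n TYPE('K)"
    and b_nz: "b \<noteq> 0"
    and N_ge: "N \<ge> 2"
    and r_exact: "2 ^ r dvd N + 1" "\<not> 2 ^ (r + 1) dvd N + 1"
    and m_def: "N + 1 = 2 ^ r * (m + 1)"
    and theta_prim: "\<theta> ^ (m + 1) = 1" "\<forall>k. 0 < k \<and> k < m + 1 \<longrightarrow> \<theta> ^ k \<noteq> 1"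
    and cond0: "r = 0 \<Longrightarrow> to_ac (a / b) \<notin>
        {to_ac (1 / b) + \<theta> ^ i + inverse (\<theta> ^ i) | i. 1 \<le> i \<and> 2 * i \<le> m}"
    and cond1: "r \<ge> 1 \<Longrightarrow> m = 0 \<Longrightarrow> a \<noteq> 1"
    and cond2: "r \<ge> 1 \<Longrightarrow> m \<ge> 1 \<Longrightarrow> to_ac (a / b) \<notin>
        {to_ac (1 / b)} \<union> {to_ac (1 / b) + \<theta> ^ i + inverse (\<theta> ^ i) | i. 1 \<le> i \<and> 2 * i \<le> m}"
  shows "lin_code (Fsub q) (2 * n * N) (pi_ext n N \<pi> ` Chat N a b)
       \<and> code_dim (Fsub q) (pi_ext n N \<pi> ` Chat N a b) (s * N)
       \<and> is_LCD (Fsub q) (2 * n * N) (pi_ext n N \<pi> ` Chat N a b)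
       \<and> min_dist (2 * n * N) (pi_ext n N \<pi> ` Chat N a b)
           \<ge> min_dist n (range \<pi>) * min_dist (2 * N) (Chat N a b)"
proof -
  have c2: "(2::'K) = 0"
    using char2[of "t * s"] card_K q_pow2(2) by (simp add: power_mult)
  have lin: "Fq_linear_map q n \<pi>" using iso by (simp add: is_isometry_def)
  have s0: "s > 0" using s_ge by simp
  have n0: "n > 0" using n_ge s_ge by simp
  have q: "q = 2 ^ t" by (rule q_pow2(2))
  define P where "P = pi_ext n N \<pi>"
  define C where "C = P ` Chat N a b"
  have CC: "C = (\<lambda>u. P (cw N a b u)) ` UNIV" by (simp add: C_def Chat_cw image_image)
  have Dnz: "Dp ((a + 1) / b) N \<noteq> 0"
    by (rule Dp_nonzero[OF c2 b_nz r_exact(2) m_def theta_prim cond0 cond1 cond2])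
  have P0: "P (cw N a b (\<lambda>i. 0)) = (\<lambda>_. 0)" by (simp add: P_def cw_zero pe_zero[OF lin])
  have LC: "lin_code (Fsub q) (2 * n * N) C"
    unfolding lin_code_def
  proof (intro conjI ballI)
    show "C \<subseteq> vecs (Fsub q) (2 * n * N)" unfolding CC P_def using pe_vecs[OF lin n0] by auto
    show "(\<lambda>_. 0) \<in> C" unfolding CC using P0 by (metis rangeI)
  next
    fix x y assume "x \<in> C" "y \<in> C"
    then obtain u w where xy: "x = P (cw N a b u)" "y = P (cw N a b w)" unfolding CC by blast
    have "(\<lambda>j. x j + y j) = P (cw N a b (\<lambda>i. u i + w i))"
      unfolding xy P_def cw_add pe_add[OF lin] by simp
    then show "(\<lambda>j. x j + y j) \<in> C" unfolding CC by simp
  next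
    fix c :: 'K and x assume c: "c \<in> Fsub q" and "x \<in> C"
    then obtain u where xy: "x = P (cw N a b u)" unfolding CC by blast
    have "smult_vec c x = P (cw N a b (\<lambda>i. c * u i))"
      unfolding xy P_def cw_smult pe_smult[OF lin c] by simp
    then show "smult_vec c x \<in> C" unfolding CC by simp
  qed
  have form: "dotp (2 * n * N) (P c) (P c') = trace q s (dotp (2 * N) c c')" for c c'
  proof -
    have "dotp (2 * n * N) (P c) (P c') = (\<Sum>j<2 * N. dotp n (\<pi> (c j)) (\<pi> (c' j)))"
      unfolding P_def by (rule dotp_pe)
    also have "\<dots> = (\<Sum>j<2 * N. trace q s (c j * c' j))"
      by (intro sum.cong refl) (rule iso_form[OF c2 q iso])
    also have "\<dots> = trace q s (dotp (2 * N) c c')"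
      unfolding dotp_def by (rule trace_sum[OF c2 q finite_lessThan, symmetric])
    finally show ?thesis .
  qed
  have LCD: "is_LCD (Fsub q) (2 * n * N) C"
    unfolding is_LCD_def
  proof
    show "{\<lambda>_. 0} \<subseteq> C \<inter> dual_code (Fsub q) (2 * n * N) C"
    proof -
      have "(\<lambda>_. 0) \<in> C" unfolding CC using P0 by (metis rangeI)
      moreover have "(\<lambda>_. (0::'K)) \<in> vecs (Fsub q) (2 * n * N)"
        by (simp add: vecs_def Fsub_def q)
      ultimately show ?thesis by (auto simp: dual_code_def dotp_def)
    qed
  next
    show "C \<inter> dual_code (Fsub q) (2 * n * N) C \<subseteq> {\<lambda>_. 0}"
    proof
      fix v assume v: "v \<in> C \<inter> dual_code (Fsub q) (2 * n * N) C"
      then obtain u where vu: "v = P (cw N a b u)" unfolding CC by blast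
      have orth: "dotp (2 * N) (cw N a b u) (cw N a b w) = 0" for w
      proof (rule ccontr)
        assume S: "dotp (2 * N) (cw N a b u) (cw N a b w) \<noteq> 0"
        obtain l where l: "trace q s (l * dotp (2 * N) (cw N a b u) (cw N a b w)) \<noteq> 0"
          using iso_nondeg[OF iso s0 S] by blast
        have "P (cw N a b (\<lambda>i. l * w i)) \<in> C" unfolding CC by simp
        then have "dotp (2 * n * N) v (P (cw N a b (\<lambda>i. l * w i))) = 0"
          using v by (auto simp: dual_code_def dotp_def mult.commute)
        then have "trace q s (dotp (2 * N) (cw N a b u) (cw N a b (\<lambda>i. l * w i))) = 0"
          unfolding vu form .
        moreover have "dotp (2 * N) (cw N a b u) (cw N a b (\<lambda>i. l * w i)) =
            l * dotp (2 * N) (cw N a b u) (cw N a b w)"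
          unfolding cw_smult dotp_def by (simp add: sum_distrib_left mult_ac)
        ultimately show False using l by simp
      qed
      have "cw N a b u = (\<lambda>j. 0)"
        by (rule Chat_LCD_K[OF c2 b_nz N_ge Dnz]) (simp add: orth)
      then show "v \<in> {\<lambda>_. 0}" using P0 vu by (simp add: cw_zero)
    qed
  qed
  have injpi: "inj \<pi>" by (rule iso_inj[OF c2 q iso s0])
  define d where "d = min_dist n (range \<pi>)"
  define D where "D = min_dist (2 * N) (Chat N a b)"
  have MD: "d * D \<le> min_dist (2 * n * N) C"
  proof -
    define w0 where "w0 = (\<lambda>i::nat. if i = 0 then (1::'K) else 0)"
    have ne: "P (cw N a b w0) \<noteq> P (cw N a b (\<lambda>i. 0))"
    proof
      assume "P (cw N a b w0) = P (cw N a b (\<lambda>i. 0))"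
      then have "pi_ext n N \<pi> (cw N a b w0) = (\<lambda>_. 0)" using P0 by (simp add: P_def)
      then have "cw N a b w0 0 = 0" using pe_zero_imp[OF c2 q iso s0] N_ge by auto
      then show False using cw_low[of 0 N a b w0] N_ge by (simp add: w0_def)
    qed
    show ?thesis
    proof (rule min_dist_ge[OF _ _ ne])
      show "P (cw N a b w0) \<in> C" "P (cw N a b (\<lambda>i. 0)) \<in> C" unfolding CC by simp_all
    next
      fix x y assume "x \<in> C" "y \<in> C" "x \<noteq> y"
      then obtain u w where xy: "x = P (cw N a b u)" "y = P (cw N a b w)" unfolding CC by blast
      have neq: "cw N a b u \<noteq> cw N a b w" using xy \<open>x \<noteq> y\<close> by auto
      have "d * D \<le> d * hamming (2 * N) (cw N a b u) (cw N a b w)"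
        unfolding D_def by (intro mult_left_mono min_dist_le neq) (auto simp: Chat_cw)
      also have "\<dots> = (\<Sum>j<2 * N. if cw N a b u j \<noteq> cw N a b w j then d else 0)"
        unfolding hamming_sum sum_distrib_left by (intro sum.cong refl) auto
      also have "\<dots> \<le> (\<Sum>j<2 * N. hamming n (\<pi> (cw N a b u j)) (\<pi> (cw N a b w j)))"
      proof (intro sum_mono)
        fix j
        show "(if cw N a b u j \<noteq> cw N a b w j then d else 0) \<le> hamming n (\<pi> (cw N a b u j)) (\<pi> (cw N a b w j))"
        proof (cases "cw N a b u j = cw N a b w j")
          case False
          then have "\<pi> (cw N a b u j) \<noteq> \<pi> (cw N a b w j)" using injpi by (auto dest: injD)
          then have "d \<le> hamming n (\<pi> (cw N a b u j)) (\<pi> (cw N a b w j))"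
            unfolding d_def by (intro min_dist_le) auto
          then show ?thesis using False by simp
        qed simp
      qed
      also have "\<dots> = hamming (2 * n * N) x y" unfolding xy P_def by (rule hamming_pe[symmetric])
      finally show "d * D \<le> hamming (2 * n * N) x y" .
    qed
  qed
  obtain e :: "nat \<Rightarrow> 'K" where B: "is_basis_over (Fsub q) s e"
    using iso unfolding is_isometry_def by blast
  define Uk where "Uk = (\<lambda>k i. if i = k div s then e (k mod s) else (0::'K))"
  define V where "V = (\<lambda>k. P (cw N a b (Uk k)))"
  define U where "U = (\<lambda>c i. \<Sum>l<s. c (i * s + l) * e l)"
  have comb: "(\<lambda>j. \<Sum>k<s * N. c k * V k j) = P (cw N a b (U c))"
    if cF: "\<forall>k<s * N. c k \<in> Fsub q" for c
  proof -
    have "(\<lambda>j. \<Sum>k<s * N. c k * V k j) = P (\<lambda>j. \<Sum>k<s * N. c k * cw N a b (Uk k) j)"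
      unfolding V_def P_def by (rule pe_lin_comb[OF lin finite_lessThan, symmetric]) (use cF in auto)
    also have "(\<lambda>j. \<Sum>k<s * N. c k * cw N a b (Uk k) j) = cw N a b (\<lambda>i. \<Sum>k<s * N. c k * Uk k i)"
      by (simp add: cw_sum cw_smult)
    also have "cw N a b (\<lambda>i. \<Sum>k<s * N. c k * Uk k i) = cw N a b (U c)"
      by (rule cw_cong) (simp add: Uk_def U_def U_sum[OF _ s0])
    finally show ?thesis .
  qed
  have DIM: "code_dim (Fsub q) C (s * N)"
    unfolding code_dim_def
  proof (intro exI conjI)
    show "\<forall>i<s * N. V i \<in> C" unfolding V_def CC by simp
    show "lin_indep_vecs (Fsub q) (s * N) V"
      unfolding lin_indep_vecs_def
    proof (intro allI impI)
      fix c k assume cF: "\<forall>i<s * N. c i \<in> Fsub q" and z: "(\<lambda>j. \<Sum>i<s * N. c i * V i j) = (\<lambda>_. 0)"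
        and k: "k < s * N"
      have "pi_ext n N \<pi> (cw N a b (U c)) = (\<lambda>_. 0)" using comb[OF cF] z by (simp add: P_def)
      then have cz: "cw N a b (U c) j = 0" if "j < 2 * N" for j
        using pe_zero_imp[OF c2 q iso s0] that by blast
      have Ui: "U c i = 0" if i: "i < N" for i
      proof -
        have "cw N a b (U c) i = 0" using cz i by simp
        then show ?thesis using cw_low[OF i, of a b "U c"] by simp
      qed
      have kd: "k div s < N" using k by (simp add: div_less_iff_less_mult s0 mult.commute)
      have cl: "(\<lambda>l. c (k div s * s + l)) l \<in> Fsub q" if "l < s" for l
      proof -
        have "k div s * s + l < s * N"
        proof -
          have "k div s * s + l < (k div s + 1) * s" using that by simp
          also have "\<dots> \<le> N * s" using kd by (intro mult_right_mono) auto
          finally show ?thesis by (simp add: mult.commute)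
        qed
        then show ?thesis using cF by simp
      qed
      have "(\<Sum>l<s. (\<lambda>l. c (k div s * s + l)) l * e l) = 0" using Ui[OF kd] by (simp add: U_def)
      moreover have indep: "\<forall>c. (\<forall>i<s. c i \<in> Fsub q) \<longrightarrow> (\<Sum>i<s. c i * e i) = 0 \<longrightarrow> (\<forall>i<s. c i = 0)"
        using B by (simp add: is_basis_over_def)
      ultimately have z2: "\<forall>l<s. c (k div s * s + l) = 0"
        using indep[rule_format, of "\<lambda>l. c (k div s * s + l)"] cl by blast
      have "k mod s < s" using s0 by simp
      then have "c (k div s * s + k mod s) = 0" using z2 by blast
      then show "c k = 0" by simp
    qed
    show "C = {(\<lambda>j. \<Sum>i<s * N. c i * V i j) | c. \<forall>i<s * N. c i \<in> Fsub q}"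
    proof
      show "{(\<lambda>j. \<Sum>i<s * N. c i * V i j) | c. \<forall>i<s * N. c i \<in> Fsub q} \<subseteq> C"
        unfolding CC using comb by auto
    next
      show "C \<subseteq> {(\<lambda>j. \<Sum>i<s * N. c i * V i j) | c. \<forall>i<s * N. c i \<in> Fsub q}"
      proof
        fix x assume "x \<in> C"
        then obtain u where xu: "x = P (cw N a b u)" unfolding CC by blast
        have "\<forall>i. \<exists>ci. (\<forall>l<s. ci l \<in> Fsub q) \<and> u i = (\<Sum>l<s. ci l * e l)"
          using B unfolding is_basis_over_def by blast
        then have "\<exists>CI. \<forall>i. (\<forall>l<s. CI i l \<in> Fsub q) \<and> u i = (\<Sum>l<s. CI i l * e l)"
          by (rule choice)
        then obtain CI where CI: "\<And>i. (\<forall>l<s. CI i l \<in> Fsub q) \<and> u i = (\<Sum>l<s. CI i l * e l)"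
          by blast
        define c where "c = (\<lambda>k. CI (k div s) (k mod s))"
        have cF: "\<forall>k<s * N. c k \<in> Fsub q"
        proof (intro allI impI)
          fix k have "k mod s < s" using s0 by simp
          then show "c k \<in> Fsub q" using CI[of "k div s"] by (simp add: c_def)
        qed
        have "U c = u"
        proof
          fix i
          have "U c i = (\<Sum>l<s. CI i l * e l)" unfolding U_def c_def
            by (intro sum.cong refl) simp
          then show "U c i = u i" using CI[of i] by simp
        qed
        then have "x = (\<lambda>j. \<Sum>k<s * N. c k * V k j)" using comb[OF cF] xu by simp
        then show "x \<in> {(\<lambda>j. \<Sum>i<s * N. c i * V i j) | c. \<forall>i<s * N. c i \<in> Fsub q}"
          using cF by blast
      qed
    qed
  qed
  show ?thesis using LC DIM LCD MD by (simp add: C_def P_def d_def D_def)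
qed

end
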